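(* Let $T>0$, $L>0$, $V_{\max}>0$, $m_a>0$ and $\alpha_1>0$, and set $\alpha_2=0$. Call a continuous function $v:[0,T]\to\mathbb{R}$ admissible if $v(0)=0$, $0\le v(t)\le V_{\max}$ for all $t\in[0,T]$, $\int_0^T v(\tau)\,\mathrm{d}\tau\le L$, and $v$ is not identically zero. For admissible $v$, let $x(t)=\int_0^t v(\tau)\,\mathrm{d}\tau$, $$\mathcal{V}(v)=\frac{1}{T}\int_0^T\left[x(t)-\frac{1}{T}\int_0^T x(\tau)\,\mathrm{d}\tau\right]^2\mathrm{d}t,\qquad \mathcal{E}(v)=\frac{1}{2}m_a v^2(T)+\int_0^T\left(\alpha_1 v^2(t)+\alpha_2 v^3(t)\right)\mathrm{d}t,$$ and define the sensing energy efficiency $\mathcal{V}(v)/\mathcal{E}(v)$. Then the profile $$v^*(t)=\min\!\left(V_{\max},\frac{\pi L}{2T}\right)\sin\!\left(\frac{\pi t}{T}\right)$$ is admissible and maximizes $\mathcal{V}(v)/\mathcal{E}(v)$ over all admissible $v$; moreover, among all admissible profiles that maximize $\mathcal{V}(v)/\mathcal{E}(v)$, $v^*$ attains the largest value of $\mathcal{V}(v)$.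
   Context: Physical interpretation: a single movable antenna of mass $m_a$ moves along a linear track of length $L$ during a sensing interval $[0,T]$ with velocity profile $v(t)$; $\mathcal{V}(v)$ is the spatial variance of its trajectory (inversely proportional to the Cramér–Rao bound of direction-of-arrival estimation), $\mathcal{E}(v)$ is the mechanical energy consumed, with $\alpha_1$ the linear damping coefficient and $\alpha_2$ the quadratic aerodynamic drag coefficient (here $\alpha_2=0$, the linear-damping-dominated regime). *)

theory Defs
  imports "HOL-Analysis.Analysis"
begin

definition admissible :: "real \<Rightarrow> real \<Rightarrow> real \<Rightarrow> (real \<Rightarrow> real) \<Rightarrow> bool" where
  "admissible T L Vmax v \<longleftrightarrow>
     continuous_on {0..T} v \<and> v 0 = 0 \<and>
     (\<forall>t\<in>{0..T}. 0 \<le> v t \<and> v t \<le> Vmax) \<and>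
     integral {0..T} v \<le> L \<and>
     (\<exists>t\<in>{0..T}. v t \<noteq> 0)"

definition position :: "(real \<Rightarrow> real) \<Rightarrow> real \<Rightarrow> real" where
  "position v t = integral {0..t} v"

definition spatial_var :: "real \<Rightarrow> (real \<Rightarrow> real) \<Rightarrow> real" where
  "spatial_var T v = (1 / T) * integral {0..T}
     (\<lambda>t. (position v t - (1 / T) * integral {0..T} (position v)) ^ 2)"

definition mech_energy :: "real \<Rightarrow> real \<Rightarrow> real \<Rightarrow> real \<Rightarrow> (real \<Rightarrow> real) \<Rightarrow> real" where
  "mech_energy T ma a1 a2 v = (1 / 2) * ma * (v T) ^ 2 +
     integral {0..T} (\<lambda>t. a1 * (v t) ^ 2 + a2 * (v t) ^ 3)"

definition vstar :: "real \<Rightarrow> real \<Rightarrow> real \<Rightarrow> real \<Rightarrow> real" where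
  "vstar T L Vmax t = min Vmax (pi * L / (2 * T)) * sin (pi * t / T)"

end

theory Submission imports Defs begin

lemma ftc_real:
  fixes f f' :: "real \<Rightarrow> real"
  assumes "a \<le> b" "\<And>x. x\<in>{a..b} \<Longrightarrow> (f has_real_derivative f' x) (at x within {a..b})"
  shows "(f' has_integral f b - f a) {a..b}"
  using assms by (intro fundamental_theorem_of_calculus) (auto simp: has_real_derivative_iff_has_vector_derivative)

lemma wirt_k:
  fixes W w :: "real \<Rightarrow> real"
  assumes T: "T>0" and W0: "W 0 = 0" and WT: "W T = 0"
  and Wd: "\<And>t. t\<in>{0..T} \<Longrightarrow> (W has_real_derivative w t) (at t within {0..T})"
  and cw: "continuous_on {0..T} w" and k: "0 < k" "k < 1"
  shows "(k*pi/T)^2 * integral {0..T} (\<lambda>t. (W t)^2) \<le> integral {0..T} (\<lambda>t. (w t)^2)"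
proof -
  define b where "b = k*pi/T"
  define d where "d = (1-k)*pi/2"
  have bpos: "b > 0" using T k by (simp add: b_def)
  have spos: "sin (b*t+d) > 0" if "t\<in>{0..T}" for t
  proof (rule sin_gt_zero)
    have "b*t \<ge> 0" using that bpos by auto
    moreover have "(1-k)*pi > 0" using k by simp
    ultimately show "0 < b*t+d" by (simp add: d_def)
    have "b*t \<le> b*T" using that bpos by (intro mult_left_mono) auto
    moreover have "b*T = pi*k" using T by (simp add: b_def)
    moreover have "pi*k < pi" using k by simp
    moreover have "b*t+d = b*t + pi/2 - pi*k/2" by (simp add: d_def left_diff_distrib diff_divide_distrib)
    ultimately show "b*t+d < pi" by linarith
  qed
  define F where "F t = b * cos (b*t+d) / sin (b*t+d) * (W t)^2" for t
  have cW: "continuous_on {0..T} W"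
    using Wd by (rule DERIV_continuous_on)
  have Fd: "(F has_real_derivative ((w t)^2 - b^2*(W t)^2 - (w t - b * cos (b*t+d) / sin (b*t+d) * W t)^2)) (at t within {0..T})"
    if t: "t\<in>{0..T}" for t
  proof -
    have s0: "sin (b*t+d) \<noteq> 0" "sin (d+b*t) \<noteq> 0" using spos[OF t] by (auto simp: add.commute)
    have "(F has_real_derivative (b * ((- sin (b*t+d) * b) * sin (b*t+d) - cos (b*t+d) * (cos (b*t+d) * b)) / (sin (b*t+d))^2 * (W t)^2
             + b * cos (b*t+d) / sin (b*t+d) * (2 * W t * w t))) (at t within {0..T})"
      unfolding F_def
      by (auto intro!: derivative_eq_intros Wd[OF t] simp: s0 power2_eq_square field_simps)
    moreover have "b * ((- sin (b*t+d) * b) * sin (b*t+d) - cos (b*t+d) * (cos (b*t+d) * b)) / (sin (b*t+d))^2 * (W t)^2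
             + b * cos (b*t+d) / sin (b*t+d) * (2 * W t * w t)
       = (w t)^2 - b^2*(W t)^2 - (w t - b * cos (b*t+d) / sin (b*t+d) * W t)^2"
    proof -
      have sc: "(sin (b*t+d))^2 + (cos (b*t+d))^2 = 1" by simp
      show ?thesis using s0 sc
        by (simp add: field_simps power2_eq_square)
    qed
    ultimately show ?thesis by simp
  qed
  have hi: "((\<lambda>t. (w t)^2 - b^2*(W t)^2 - (w t - b * cos (b*t+d) / sin (b*t+d) * W t)^2) has_integral F T - F 0) {0..T}"
    using T Fd by (intro ftc_real) auto
  have "F T - F 0 = 0" by (simp add: F_def W0 WT)
  define g1 where "g1 t = (w t)^2" for t
  define g2 where "g2 t = b^2*(W t)^2" for t
  define g3 where "g3 t = (w t - b * cos (b*t+d) / sin (b*t+d) * W t)^2" for t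
  have c1: "continuous_on {0..T} g1" unfolding g1_def using cw by (intro continuous_intros)
  have c2: "continuous_on {0..T} g2" unfolding g2_def using cW by (intro continuous_intros)
  have c3: "continuous_on {0..T} g3" unfolding g3_def
    using cW cw by (intro continuous_intros) (auto dest: spos)
  have i1: "g1 integrable_on {0..T}" "g2 integrable_on {0..T}" "g3 integrable_on {0..T}"
    using c1 c2 c3 by (auto intro: integrable_continuous_real)
  have "integral {0..T} (\<lambda>t. g1 t - g2 t - g3 t) = 0"
    using hi \<open>F T - F 0 = 0\<close> unfolding g1_def g2_def g3_def by (simp add: integral_unique)
  then have "integral {0..T} g1 - integral {0..T} g2 - integral {0..T} g3 = 0"
    using i1 by (simp add: integral_diff integrable_diff)
  moreover have "integral {0..T} g3 \<ge> 0"
    using i1 by (intro integral_nonneg) (auto simp: g3_def)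
  moreover have "integral {0..T} g2 = b^2 * integral {0..T} (\<lambda>t. (W t)^2)"
    by (simp add: g2_def[abs_def])
  ultimately show ?thesis unfolding b_def g1_def by linarith
qed

lemma wirt:
  fixes W w :: "real \<Rightarrow> real"
  assumes T: "T>0" and W0: "W 0 = 0" and WT: "W T = 0"
  and Wd: "\<And>t. t\<in>{0..T} \<Longrightarrow> (W has_real_derivative w t) (at t within {0..T})"
  and cw: "continuous_on {0..T} w"
  shows "(pi/T)^2 * integral {0..T} (\<lambda>t. (W t)^2) \<le> integral {0..T} (\<lambda>t. (w t)^2)"
proof (rule ccontr)
  define I0 where "I0 = integral {0..T} (\<lambda>t. (W t)^2)"
  define I1 where "I1 = integral {0..T} (\<lambda>t. (w t)^2)"
  assume "\<not> ?thesis"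
  then have lt: "I1 < (pi/T)^2 * I0" by (simp add: I0_def I1_def)
  have cW: "continuous_on {0..T} W" using Wd by (rule DERIV_continuous_on)
  have I1nn: "I1 \<ge> 0" unfolding I1_def
    using cw by (intro integral_nonneg integrable_continuous_real continuous_intros) auto
  define A where "A = (pi/T)^2 * I0"
  have Apos: "A > 0" using lt I1nn by (simp add: A_def)
  define r where "r = I1 / A"
  have r: "0 \<le> r" "r < 1" using Apos I1nn lt by (auto simp: r_def A_def)
  define k where "k = sqrt ((1+r)/2)"
  have k2: "k^2 = (1+r)/2" using r by (simp add: k_def)
  have k: "0 < k" "k < 1" using r by (auto simp: k_def real_sqrt_less_iff)
  have "(k*pi/T)^2 * I0 \<le> I1" unfolding I0_def I1_def
    by (rule wirt_k[OF T W0 WT Wd cw k]) auto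
  moreover have "(k*pi/T)^2 * I0 = k^2 * A" by (simp add: A_def power_mult_distrib power_divide)
  moreover have "k^2 * A > r * A" using k2 r Apos by (intro mult_strict_right_mono) auto
  moreover have "r * A = I1" using Apos by (simp add: r_def)
  ultimately show False by linarith
qed


lemma core:
  fixes v :: "real \<Rightarrow> real"
  assumes T: "T > 0" and cv: "continuous_on {0..T} v"
  defines "x \<equiv> \<lambda>t. integral {0..t} v"
  defines "m \<equiv> (1/T) * integral {0..T} x"
  defines "I1 \<equiv> integral {0..T} (\<lambda>t. (x t - m)^2)"
  defines "I2 \<equiv> integral {0..T} (\<lambda>t. (v t)^2)"
  shows "(pi/T)^2 * I1 \<le> I2 \<and> ((pi/T)^2 * I1 = I2 \<longrightarrow> (\<exists>C. \<forall>t\<in>{0..T}. v t = C * sin (pi/T * t)))"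
proof -
  define a where "a = pi/T"
  have apos: "a > 0" using T by (simp add: a_def)
  have xd: "(x has_real_derivative v t) (at t within {0..T})" if "t\<in>{0..T}" for t
    unfolding x_def using cv that by (rule integral_has_real_derivative)
  have cx: "continuous_on {0..T} x" using xd by (rule DERIV_continuous_on)
  define w where "w t = x t - m" for t
  have wd: "(w has_real_derivative v t) (at t within {0..T})" if "t\<in>{0..T}" for t
    unfolding w_def using xd[OF that] by (auto intro!: derivative_eq_intros)
  have cw: "continuous_on {0..T} w" unfolding w_def using cx by (intro continuous_intros)
  define W where "W t = integral {0..t} w" for t
  have Wd: "(W has_real_derivative w t) (at t within {0..T})" if "t\<in>{0..T}" for t
    unfolding W_def using cw that by (rule integral_has_real_derivative)
  have cW: "continuous_on {0..T} W" using Wd by (rule DERIV_continuous_on)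
  have W0: "W 0 = 0" by (simp add: W_def)
  have WT: "W T = 0"
  proof -
    have "W T = integral {0..T} x - integral {0..T} (\<lambda>t. m)"
      unfolding W_def w_def using cx
      by (intro integral_diff integrable_continuous_real) auto
    also have "\<dots> = 0" using T by (simp add: m_def)
    finally show ?thesis .
  qed
  define J where "J = integral {0..T} (\<lambda>t. W t * v t)"
  define I0 where "I0 = integral {0..T} (\<lambda>t. (W t)^2)"
  have iW2: "(\<lambda>t. (W t)^2) integrable_on {0..T}" using cW by (intro integrable_continuous_real continuous_intros)
  have iw2: "(\<lambda>t. (w t)^2) integrable_on {0..T}" using cw by (intro integrable_continuous_real continuous_intros)
  have iv2: "(\<lambda>t. (v t)^2) integrable_on {0..T}" using cv by (intro integrable_continuous_real continuous_intros)
  have iWv: "(\<lambda>t. W t * v t) integrable_on {0..T}" using cv cW by (intro integrable_continuous_real continuous_intros)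
  have I1w: "I1 = integral {0..T} (\<lambda>t. (w t)^2)" by (simp add: I1_def w_def)
  have bp: "I1 + J = 0"
  proof -
    have "((\<lambda>t. (w t)^2 + W t * v t) has_integral (W T * w T - W 0 * w 0)) {0..T}"
    proof (rule ftc_real[of 0 T "\<lambda>t. W t * w t"])
      fix t assume t: "t \<in> {0..T}"
      show "((\<lambda>t. W t * w t) has_real_derivative (w t)^2 + W t * v t) (at t within {0..T})"
        using Wd[OF t] wd[OF t] by (auto intro!: derivative_eq_intros simp: power2_eq_square)
    qed (use T in auto)
    then have "integral {0..T} (\<lambda>t. (w t)^2 + W t * v t) = 0" by (simp add: W0 WT integral_unique)
    then show ?thesis using iw2 iWv by (simp add: I1w J_def integral_add)
  qed
  have wirt1: "a^2 * I0 \<le> I1" unfolding a_def I0_def I1w by (rule wirt[OF T W0 WT Wd cw])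
  define g where "g t = (v t + a^2 * W t)^2" for t
  have cg: "continuous_on {0..T} g" unfolding g_def using cv cW by (intro continuous_intros)
  have gint: "integral {0..T} g = I2 + 2*a^2*J + a^4 * I0"
  proof -
    have "g = (\<lambda>t. (v t)^2 + (2*a^2) * (W t * v t) + a^4 * (W t)^2)"
      by (simp add: g_def fun_eq_iff algebra_simps eval_nat_numeral)
    moreover have "((\<lambda>t. (v t)^2 + (2*a^2) * (W t * v t) + a^4 * (W t)^2) has_integral (I2 + (2*a^2)*J + a^4*I0)) {0..T}"
      unfolding I2_def J_def I0_def using iv2 iWv iW2
      by (intro has_integral_add has_integral_mult_right integrable_integral)
    ultimately show ?thesis by (simp add: integral_unique)
  qed
  have gnn: "integral {0..T} g \<ge> 0" using cg by (intro integral_nonneg integrable_continuous_real) (auto simp: g_def)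
  have a4: "a^4 * I0 \<le> a^2 * I1"
  proof -
    have "a^4 * I0 = a^2 * (a^2 * I0)" by (simp add: power_numeral_reduce)
    also have "\<dots> \<le> a^2 * I1" using wirt1 by (intro mult_left_mono) auto
    finally show ?thesis .
  qed
  have Jm: "J = - I1" using bp by linarith
  have gint2: "integral {0..T} g = I2 - 2*(a^2*I1) + a^4*I0" using gint Jm by (simp add: algebra_simps)
  have ineq: "a^2 * I1 \<le> I2" using gint2 gnn a4 by linarith
  moreover have "\<exists>C. \<forall>t\<in>{0..T}. v t = C * sin (a * t)" if eq: "a^2 * I1 = I2"
  proof -
    have "integral {0..T} g = 0" using gint2 gnn a4 eq by linarith
    then have g0: "\<forall>t\<in>{0..T}. g t = 0" using cg T by (subst (asm) integral_eq_0_iff) (auto simp: g_def)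
    have vW: "v t = - (a^2 * W t)" if "t \<in> {0..T}" for t
    proof -
      have "(v t + a^2 * W t)^2 = 0" using g0 that by (simp add: g_def)
      then have "v t + a^2 * W t = 0" by simp
      then show ?thesis by linarith
    qed
    define P where "P t = w t * sin (a*t) - a * W t * cos (a*t)" for t
    define Q where "Q t = w t * cos (a*t) + a * W t * sin (a*t)" for t
    have "\<exists>c. \<forall>t\<in>{0..T}. P t = c"
    proof (rule has_field_derivative_zero_constant)
      fix t assume t: "t \<in> {0..T}"
      have "(P has_real_derivative (v t * sin (a*t) + w t * (cos (a*t) * a) - (a * w t * cos (a*t) + a * W t * (- sin (a*t) * a)))) (at t within {0..T})"
        unfolding P_def using Wd[OF t] wd[OF t] by (auto intro!: derivative_eq_intros)
      moreover have "v t * sin (a*t) + w t * (cos (a*t) * a) - (a * w t * cos (a*t) + a * W t * (- sin (a*t) * a)) = 0"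
        using vW[OF t] by (simp add: algebra_simps power2_eq_square)
      ultimately show "(P has_real_derivative 0) (at t within {0..T})" by simp
    qed auto
    then obtain cP where cP: "\<And>t. t\<in>{0..T} \<Longrightarrow> P t = cP" by blast
    have "\<exists>c. \<forall>t\<in>{0..T}. Q t = c"
    proof (rule has_field_derivative_zero_constant)
      fix t assume t: "t \<in> {0..T}"
      have "(Q has_real_derivative (v t * cos (a*t) + w t * (- sin (a*t) * a) + (a * w t * sin (a*t) + a * W t * (cos (a*t) * a)))) (at t within {0..T})"
        unfolding Q_def using Wd[OF t] wd[OF t] by (auto intro!: derivative_eq_intros)
      moreover have "v t * cos (a*t) + w t * (- sin (a*t) * a) + (a * w t * sin (a*t) + a * W t * (cos (a*t) * a)) = 0"
        using vW[OF t] by (simp add: algebra_simps power2_eq_square)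
      ultimately show "(Q has_real_derivative 0) (at t within {0..T})" by simp
    qed auto
    then obtain cQ where cQ: "\<And>t. t\<in>{0..T} \<Longrightarrow> Q t = cQ" by blast
    have P0: "P 0 = 0" by (simp add: P_def W0)
    have Q0: "Q 0 = w 0" by (simp add: Q_def)
    have T0: "0 \<in> {0..T}" using T by auto
    show ?thesis
    proof (intro exI ballI)
      fix t assume t: "t \<in> {0..T}"
      have Pt: "P t = 0" using cP[OF t] cP[OF T0] P0 by simp
      have Qt: "Q t = w 0" using cQ[OF t] cQ[OF T0] Q0 by simp
      have "a * W t = sin (a*t) * Q t - cos (a*t) * P t"
      proof -
        have ss: "sin (a*t) * sin (a*t) = 1 - cos (a*t) * cos (a*t)"
          using sin_cos_squared_add[of "a*t"] by (simp add: power2_eq_square)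
        show ?thesis by (simp add: P_def Q_def algebra_simps ss)
      qed
      then have "a * W t = w 0 * sin (a*t)" using Pt Qt by simp
      then show "v t = (- a * w 0) * sin (a * t)" using vW[OF t]
        by (simp add: power2_eq_square)
    qed
  qed
  ultimately show ?thesis by (simp add: a_def)
qed


lemma ftc_int:
  fixes f f' :: "real \<Rightarrow> real"
  assumes "a \<le> b" "\<And>x. x\<in>{a..b} \<Longrightarrow> (f has_real_derivative f' x) (at x within {a..b})"
  shows "integral {a..b} f' = f b - f a"
  using ftc_real[OF assms] by (rule integral_unique)

lemma sin_profile:
  fixes v :: "real \<Rightarrow> real"
  assumes T: "T > 0" and vC: "\<And>t. t\<in>{0..T} \<Longrightarrow> v t = C * sin (pi/T*t)"
  shows "spatial_var T v = C^2 / (2*(pi/T)^2)"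
    and "integral {0..T} (\<lambda>t. (v t)^2) = C^2 * T / 2"
    and "integral {0..T} v = 2 * C * T / pi"
proof -
  define a where "a = pi/T"
  have apos: "a > 0" using T by (simp add: a_def)
  have aT: "a * T = pi" using T by (simp add: a_def)
  have vC': "v t = C * sin (a*t)" if "t\<in>{0..T}" for t using vC[OF that] by (simp add: a_def)
  have pos: "position v t = C/a * (1 - cos (a*t))" if t: "t\<in>{0..T}" for t
  proof -
    have "position v t = integral {0..t} (\<lambda>u. C * sin (a*u))"
      unfolding position_def using t by (intro integral_cong) (auto simp: vC')
    also have "\<dots> = (- C/a * cos (a*t)) - (- C/a * cos (a*0))"
    proof (rule ftc_int)
      fix x assume "x \<in> {0..t}"
      show "((\<lambda>u. - C/a * cos (a*u)) has_real_derivative C * sin (a*x)) (at x within {0..t})"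
        using apos by (auto intro!: derivative_eq_intros)
    qed (use t in auto)
    finally show ?thesis by (simp add: algebra_simps diff_divide_distrib)
  qed
  have intpos: "integral {0..T} (position v) = C*T/a"
  proof -
    have "integral {0..T} (position v) = integral {0..T} (\<lambda>t. C/a * (1 - cos (a*t)))"
      by (intro integral_cong) (auto simp: pos)
    also have "\<dots> = (C/a * (T - sin (a*T)/a)) - (C/a * (0 - sin (a*0)/a))"
    proof (rule ftc_int)
      fix x assume "x \<in> {0..T}"
      show "((\<lambda>u. C/a * (u - sin (a*u)/a)) has_real_derivative C/a * (1 - cos (a*x))) (at x within {0..T})"
        using apos by (auto intro!: derivative_eq_intros)
    qed (use T in auto)
    finally show ?thesis by (simp add: aT)
  qed
  have m: "(1/T) * integral {0..T} (position v) = C/a" using T by (simp add: intpos)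
  have cos2: "integral {0..T} (\<lambda>t. (cos (a*t))^2) = T/2"
  proof -
    have "integral {0..T} (\<lambda>t. (cos (a*t))^2) = (T/2 + sin (2*a*T)/(4*a)) - (0/2 + sin (2*a*0)/(4*a))"
    proof (rule ftc_int)
      fix x assume "x \<in> {0..T}"
      have "((\<lambda>u. u/2 + sin (2*a*u)/(4*a)) has_real_derivative 1/2 + cos (2*a*x) * (2*a) /(4*a)) (at x within {0..T})"
        using apos by (auto intro!: derivative_eq_intros)
      moreover have "1/2 + cos (2*a*x) * (2*a) /(4*a) = (cos (a*x))^2"
        using apos cos_double_cos[of "a*x"] by (simp add: field_simps mult.assoc)
      ultimately show "((\<lambda>u. u/2 + sin (2*a*u)/(4*a)) has_real_derivative (cos (a*x))^2) (at x within {0..T})" by simp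
    qed (use T in auto)
    also have "sin (2*a*T) = 0" by (simp add: mult.assoc aT)
    finally show ?thesis by simp
  qed
  have sin2: "integral {0..T} (\<lambda>t. (sin (a*t))^2) = T/2"
  proof -
    have "integral {0..T} (\<lambda>t. (sin (a*t))^2) = integral {0..T} (\<lambda>t. 1 - (cos (a*t))^2)"
      by (intro integral_cong) (simp add: sin_squared_eq)
    also have "\<dots> = integral {0..T} (\<lambda>t. 1) - integral {0..T} (\<lambda>t. (cos (a*t))^2)"
      by (intro integral_diff integrable_continuous_real continuous_intros)
    also have "\<dots> = T/2" using T by (simp add: cos2)
    finally show ?thesis .
  qed
  show "spatial_var T v = C^2 / (2*(pi/T)^2)"
  proof -
    have "integral {0..T} (\<lambda>t. (position v t - (1/T) * integral {0..T} (position v))^2)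
        = integral {0..T} (\<lambda>t. (C/a)^2 * (cos (a*t))^2)"
      unfolding m by (intro integral_cong) (auto simp: pos power2_eq_square algebra_simps)
    also have "\<dots> = (C/a)^2 * (T/2)" by (simp add: cos2)
    finally show ?thesis unfolding spatial_var_def using T by (simp add: a_def field_simps)
  qed
  show "integral {0..T} (\<lambda>t. (v t)^2) = C^2 * T / 2"
  proof -
    have "integral {0..T} (\<lambda>t. (v t)^2) = integral {0..T} (\<lambda>t. C^2 * (sin (a*t))^2)"
      by (intro integral_cong) (auto simp: vC' power_mult_distrib)
    also have "\<dots> = C^2 * T/2" by (simp add: sin2)
    finally show ?thesis .
  qed
  show "integral {0..T} v = 2 * C * T / pi"
  proof -
    have "integral {0..T} v = integral {0..T} (\<lambda>u. C * sin (a*u))"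
      by (intro integral_cong) (auto simp: vC')
    also have "\<dots> = (- C/a * cos (a*T)) - (- C/a * cos (a*0))"
    proof (rule ftc_int)
      fix x assume "x \<in> {0..T}"
      show "((\<lambda>u. - C/a * cos (a*u)) has_real_derivative C * sin (a*x)) (at x within {0..T})"
        using apos by (auto intro!: derivative_eq_intros)
    qed (use T in auto)
    also have "\<dots> = 2*C/a" by (simp add: aT)
    finally show ?thesis using T by (simp add: a_def)
  qed
qed


theorem mainTheorem2:
  fixes T L Vmax ma a1 :: real
  assumes "T > 0" and "L > 0" and "Vmax > 0" and "ma > 0" and "a1 > 0"
  shows "admissible T L Vmax (vstar T L Vmax)
    \<and> (\<forall>v. admissible T L Vmax v \<longrightarrow>
          spatial_var T v / mech_energy T ma a1 0 v
            \<le> spatial_var T (vstar T L Vmax) / mech_energy T ma a1 0 (vstar T L Vmax))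
    \<and> (\<forall>v. admissible T L Vmax v \<and>
          spatial_var T v / mech_energy T ma a1 0 v
            = spatial_var T (vstar T L Vmax) / mech_energy T ma a1 0 (vstar T L Vmax)
          \<longrightarrow> spatial_var T v \<le> spatial_var T (vstar T L Vmax))"
proof -
  note T = assms(1) and L = assms(2) and Vm = assms(3) and ma = assms(4) and a1 = assms(5)
  define a where "a = pi/T"
  have apos: "a > 0" using T by (simp add: a_def)
  define c where "c = min Vmax (pi * L / (2 * T))"
  have cpos: "c > 0" using T L Vm by (simp add: c_def)
  have cV: "c \<le> Vmax" and cL: "c \<le> pi * L / (2 * T)" by (auto simp: c_def)
  define vs where "vs = vstar T L Vmax"
  have vsC: "vs t = c * sin (pi/T*t)" for t by (simp add: vs_def vstar_def c_def)
  have sinnn: "0 \<le> sin (pi/T*t)" if "t \<in> {0..T}" for t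
  proof (rule sin_ge_zero)
    show "0 \<le> pi/T*t" using that T by auto
    have "pi/T*t \<le> pi/T*T" using that T by (intro mult_left_mono) auto
    then show "pi/T*t \<le> pi" using T by simp
  qed
  have TC: "T/2 \<in> {0..T}" using T by auto
  have sinmid: "sin (pi/T*(T/2)) = 1" using T by simp
  have prof: "spatial_var T v = C^2 / (2*(pi/T)^2) \<and> integral {0..T} (\<lambda>t. (v t)^2) = C^2 * T / 2
      \<and> integral {0..T} v = 2 * C * T / pi" if "\<And>t. t\<in>{0..T} \<Longrightarrow> v t = C * sin (pi/T*t)" for v C
    using sin_profile[OF T that] by auto
  have adm: "admissible T L Vmax vs"
    unfolding admissible_def
  proof (intro conjI ballI)
    show "continuous_on {0..T} vs" unfolding vsC[abs_def] by (intro continuous_intros)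
    show "vs 0 = 0" by (simp add: vsC)
    fix t assume t: "t \<in> {0..T}"
    show "0 \<le> vs t" using sinnn[OF t] cpos by (simp add: vsC)
    have "c * sin (pi/T*t) \<le> c * 1" using cpos by (intro mult_left_mono) auto
    then show "vs t \<le> Vmax" using cV by (simp add: vsC)
  next
    have "integral {0..T} vs = 2 * c * T / pi" using prof[of vs c] vsC by auto
    also have "\<dots> \<le> L" using cL T by (simp add: field_simps)
    finally show "integral {0..T} vs \<le> L" .
    show "\<exists>t\<in>{0..T}. vs t \<noteq> 0" using TC sinmid cpos by (intro bexI[of _ "T/2"]) (auto simp: vsC)
  qed
  define I1 where "I1 v = integral {0..T} (\<lambda>t. (position v t - (1/T) * integral {0..T} (position v))^2)" for v
  define I2 where "I2 v = integral {0..T} (\<lambda>t. (v t)^2)" for v :: "real \<Rightarrow> real"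
  have gen: "spatial_var T v = I1 v / T \<and> mech_energy T ma a1 0 v = ma/2 * (v T)^2 + a1 * I2 v
     \<and> I2 v > 0 \<and> a^2 * I1 v \<le> I2 v \<and> (a^2 * I1 v = I2 v \<longrightarrow> (\<exists>C. \<forall>t\<in>{0..T}. v t = C * sin (pi/T * t)))"
    if av: "admissible T L Vmax v" for v
  proof -
    have cv: "continuous_on {0..T} v" using av by (simp add: admissible_def)
    have pv: "position v = (\<lambda>t. integral {0..t} v)" by (simp add: position_def[abs_def])
    have core': "a^2 * I1 v \<le> I2 v \<and> (a^2 * I1 v = I2 v \<longrightarrow> (\<exists>C. \<forall>t\<in>{0..T}. v t = C * sin (pi/T * t)))"
      using core[OF T cv] unfolding I1_def I2_def a_def pv by simp
    have "I2 v \<noteq> 0"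
    proof
      assume "I2 v = 0"
      then have "\<forall>t\<in>{0..T}. (v t)^2 = 0" unfolding I2_def using cv T
        by (subst (asm) integral_eq_0_iff) (auto intro: continuous_intros)
      then show False using av by (auto simp: admissible_def)
    qed
    moreover have "I2 v \<ge> 0" unfolding I2_def using cv
      by (intro integral_nonneg integrable_continuous_real continuous_intros) auto
    moreover have "mech_energy T ma a1 0 v = ma/2 * (v T)^2 + a1 * I2 v"
      unfolding mech_energy_def I2_def by simp
    moreover have "spatial_var T v = I1 v / T" by (simp add: spatial_var_def I1_def)
    ultimately show ?thesis using core' by auto
  qed
  define R where "R = 1 / (a^2 * T * a1)"
  have Rpos: "R > 0" using apos T a1 by (simp add: R_def)
  have vsratio: "spatial_var T vs / mech_energy T ma a1 0 vs = R"
  proof -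
    have p: "spatial_var T vs = c^2 / (2*a^2)" "I2 vs = c^2 * T / 2"
      using prof[of vs c] vsC by (auto simp: I2_def a_def)
    have vsT: "vs T = 0" using T by (simp add: vsC)
    have E: "mech_energy T ma a1 0 vs = a1 * (c^2 * T / 2)" using gen[OF adm] p vsT by simp
    show ?thesis unfolding E p(1) R_def using cpos apos T a1 by (simp add: field_simps power2_eq_square)
  qed
  have key: "spatial_var T v \<le> R * mech_energy T ma a1 0 v \<and> 0 < mech_energy T ma a1 0 v
     \<and> (spatial_var T v = R * mech_energy T ma a1 0 v \<longrightarrow> a^2 * I1 v = I2 v)"
    if av: "admissible T L Vmax v" for v
  proof -
    note g = gen[OF av]
    have E: "mech_energy T ma a1 0 v \<ge> a1 * I2 v" using g ma by simp
    have "a1 * I2 v > 0" using g a1 by simp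
    then have Epos: "0 < mech_energy T ma a1 0 v" using E by linarith
    have RE: "R * (a1 * I2 v) = I2 v / (a^2 * T)" using a1 by (simp add: R_def)
    have "R * (a1 * I2 v) \<le> R * mech_energy T ma a1 0 v" using E Rpos by (intro mult_left_mono) auto
    moreover have "I1 v / T \<le> I2 v / (a^2 * T)" using g apos T
      by (simp add: field_simps)
    moreover have "a^2 * I1 v = I2 v" if "I1 v / T = R * mech_energy T ma a1 0 v"
    proof -
      have "I2 v / (a^2 * T) \<le> I1 v / T" using that RE \<open>R * (a1 * I2 v) \<le> R * mech_energy T ma a1 0 v\<close> by simp
      then have "I2 v \<le> a^2 * I1 v" using apos T by (simp add: field_simps)
      then show ?thesis using g by simp
    qed
    ultimately show ?thesis using g Epos RE by auto
  qed
  have part2: "spatial_var T v / mech_energy T ma a1 0 v \<le> spatial_var T vs / mech_energy T ma a1 0 vs"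
    if av: "admissible T L Vmax v" for v
    using key[OF av] unfolding vsratio by (simp add: pos_divide_le_eq mult.commute)
  have part3: "spatial_var T v \<le> spatial_var T vs"
    if av: "admissible T L Vmax v" and eq: "spatial_var T v / mech_energy T ma a1 0 v = spatial_var T vs / mech_energy T ma a1 0 vs" for v
  proof -
    note k = key[OF av]
    have "spatial_var T v = R * mech_energy T ma a1 0 v" using eq k unfolding vsratio
      by (simp add: divide_eq_eq mult.commute)
    then have "a^2 * I1 v = I2 v" using k by simp
    then obtain C where C: "\<And>t. t\<in>{0..T} \<Longrightarrow> v t = C * sin (pi/T * t)" using gen[OF av] by blast
    have Cle: "C \<le> c"
    proof -
      have "C \<le> Vmax" using C[OF TC] sinmid av TC by (auto simp: admissible_def)
      moreover have "2 * C * T / pi \<le> L" using prof[OF C] av by (simp add: admissible_def)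
      then have "C \<le> pi * L / (2 * T)" using T by (simp add: field_simps)
      ultimately show ?thesis by (simp add: c_def)
    qed
    have Cpos: "C \<ge> 0"
    proof (rule ccontr)
      assume "\<not> C \<ge> 0"
      obtain t0 where t0: "t0 \<in> {0..T}" "v t0 \<noteq> 0" using av by (auto simp: admissible_def)
      have "v t0 \<ge> 0" using av t0 by (auto simp: admissible_def)
      moreover have "C * sin (pi/T*t0) \<le> 0" using \<open>\<not> C \<ge> 0\<close> sinnn[OF t0(1)] by (simp add: mult_nonpos_nonneg)
      ultimately show False using C[OF t0(1)] t0(2) by simp
    qed
    have "C^2 \<le> c^2" using Cle Cpos by (intro power_mono) auto
    then have "C^2 / (2*(pi/T)^2) \<le> c^2 / (2*(pi/T)^2)" by (intro divide_right_mono) auto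
    then show ?thesis using prof[OF C] prof[of vs c] vsC by simp
  qed
  show ?thesis using adm part2 part3 unfolding vs_def by blast
qed

end
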